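(* Let $n\ge 3$ and let $C_n=(v_0,\dots,v_{n-1})$ be the cycle. In the Random Majority Model (RMM) on $C_n$, the only winning set is the set of all nodes. In the Majority Model (MM) on $C_n$, the minimum size of a winning set equals $\lfloor n/2\rfloor+1$.
   Context: A coloring is a map from the nodes to $\{b,w\}$. In MM, all nodes update simultaneously: a node adopts the color strictly more frequent among its neighbors in the previous round and keeps its color in case of a tie. RMM is the same except that in case of a tie the node chooses blue or white independently and uniformly at random. A node set $S$ is a winning set if, whenever all nodes of $S$ are blue (resp. white) initially, the process eventually reaches the coloring in which all nodes are blue (resp. white), regardless of the initial colors of the nodes outside $S$ and of all random choices (in RMM). *)

theory Defs
  imports Main
begin

datatype color = Blue | White

text \<open>A graph is given by a node set V and a neighbourhood function N.
  A coloring is a map from nodes to colors (values outside V are irrelevant).\<close>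

definition num_col :: "('a \<Rightarrow> 'a set) \<Rightarrow> ('a \<Rightarrow> color) \<Rightarrow> color \<Rightarrow> 'a \<Rightarrow> nat" where
  "num_col N c x v = card {u \<in> N v. c u = x}"

definition mm_step :: "('a \<Rightarrow> 'a set) \<Rightarrow> ('a \<Rightarrow> color) \<Rightarrow> ('a \<Rightarrow> color)" where
  "mm_step N c = (\<lambda>v. if num_col N c Blue v > num_col N c White v then Blue
                       else if num_col N c White v > num_col N c Blue v then White
                       else c v)"

text \<open>Possible successors in the Random Majority Model: strict majorities are
  adopted, ties may be resolved either way (every realisation of the random choices).\<close>
definition rmm_succ :: "'a set \<Rightarrow> ('a \<Rightarrow> 'a set) \<Rightarrow> ('a \<Rightarrow> color) \<Rightarrow> ('a \<Rightarrow> color) \<Rightarrow> bool" where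
  "rmm_succ V N c c' \<longleftrightarrow> (\<forall>v\<in>V.
      (num_col N c Blue v > num_col N c White v \<longrightarrow> c' v = Blue) \<and>
      (num_col N c White v > num_col N c Blue v \<longrightarrow> c' v = White))"

definition monochrome :: "'a set \<Rightarrow> ('a \<Rightarrow> color) \<Rightarrow> color \<Rightarrow> bool" where
  "monochrome V c x \<longleftrightarrow> (\<forall>v\<in>V. c v = x)"

definition winning_MM :: "'a set \<Rightarrow> ('a \<Rightarrow> 'a set) \<Rightarrow> 'a set \<Rightarrow> bool" where
  "winning_MM V N S \<longleftrightarrow> S \<subseteq> V \<and>
     (\<forall>x c0. monochrome S c0 x \<longrightarrow> (\<exists>t. monochrome V ((mm_step N ^^ t) c0) x))"

definition winning_RMM :: "'a set \<Rightarrow> ('a \<Rightarrow> 'a set) \<Rightarrow> 'a set \<Rightarrow> bool" where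
  "winning_RMM V N S \<longleftrightarrow> S \<subseteq> V \<and>
     (\<forall>x run. (\<forall>t. rmm_succ V N (run t) (run (Suc t))) \<longrightarrow> monochrome S (run 0) x \<longrightarrow>
        (\<exists>t. monochrome V (run t) x))"

definition cycle_nodes :: "nat \<Rightarrow> nat set" where
  "cycle_nodes n = {..<n}"

definition cycle_nbrs :: "nat \<Rightarrow> nat \<Rightarrow> nat set" where
  "cycle_nbrs n v = {(v + 1) mod n, (v + n - 1) mod n}"

end

theory Submission
  imports Defs
begin

definition nx :: "nat \<Rightarrow> nat \<Rightarrow> nat" where "nx n v = (v+1) mod n"
definition pv :: "nat \<Rightarrow> nat \<Rightarrow> nat" where "pv n v = (v+n-1) mod n"

lemma nbrs_eq: "cycle_nbrs n v = {nx n v, pv n v}" by (simp add: cycle_nbrs_def nx_def pv_def)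

lemma nx_r: "nx n v = nx n (v mod n)" by (simp add: nx_def mod_Suc_eq)
lemma pv_r: assumes "n > 0" shows "pv n v = pv n (v mod n)"
proof -
  have "pv n v = (v + (n-1)) mod n" using assms by (simp add: pv_def)
  also have "\<dots> = (v mod n + (n-1)) mod n" by (simp add: mod_add_left_eq)
  finally show ?thesis using assms by (simp add: pv_def)
qed
lemma nx_val: "r < n \<Longrightarrow> nx n r = (if r+1 = n then 0 else r+1)" by (simp add: nx_def)
lemma pv_val: assumes "r < n" shows "pv n r = (if r = 0 then n-1 else r-1)"
proof (cases "r = 0")
  case True then show ?thesis using assms by (simp add: pv_def)
next
  case False
  have "pv n r = ((r - 1) + n) mod n" unfolding pv_def
    by (rule arg_cong[where f="\<lambda>x. x mod n"]) (use False in simp)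
  also have "\<dots> = r - 1" using assms by simp
  finally show ?thesis using False by simp
qed

lemma nx_pv_neq: assumes "n \<ge> 3" shows "nx n v \<noteq> pv n v"
proof -
  have r: "v mod n < n" using assms by simp
  define r' where "r' = v mod n"
  have a0: "nx n v = nx n r'" using nx_r[of n v] r'_def by simp
  have b0: "pv n v = pv n r'" using pv_r[of n v] r'_def assms by simp
  have a: "nx n v = (if r'+1 = n then 0 else r'+1)" unfolding a0 using nx_val[OF r] r'_def by simp
  have b: "pv n v = (if r' = 0 then n-1 else r'-1)" unfolding b0 using pv_val[OF r] r'_def by simp
  have rl: "r' < n" using r r'_def by simp
  show ?thesis
  proof (cases "r' = 0")
    case True
    then have "nx n v = 1" "pv n v = n - 1" using a b assms by auto
    then show ?thesis using assms by linarith
  next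
    case False
    then have "pv n v = r' - 1" using b by simp
    moreover have "(r'+1 = n \<and> nx n v = 0) \<or> nx n v = r' + 1" using a by presburger
    ultimately show ?thesis using False assms by linarith
  qed
qed

lemma nx_lt: "n > 0 \<Longrightarrow> nx n v < n" by (simp add: nx_def)
lemma pv_lt: "n > 0 \<Longrightarrow> pv n v < n" by (simp add: pv_def)
lemma pv_nx: assumes "n \<ge> 3" "v < n" shows "pv n (nx n v) = v"
proof (cases "v+1 = n")
  case True
  then have "nx n v = 0" using nx_val[of v n] assms by simp
  then show ?thesis using pv_val[of 0 n] True assms by simp
next
  case False
  then have "nx n v = v+1" using nx_val[of v n] assms by simp
  then show ?thesis using pv_val[of "v+1" n] False assms by simp
qed

lemma nx_pv: assumes "n \<ge> 3" "v < n" shows "nx n (pv n v) = v"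
proof (cases "v = 0")
  case True
  then have "pv n v = n - 1" using pv_val[of v n] assms by simp
  then show ?thesis using nx_val[of "n-1" n] True assms by simp
next
  case False
  then have "pv n v = v - 1" using pv_val[of v n] assms by simp
  then show ?thesis using nx_val[of "v-1" n] False assms by simp
qed

lemma card2: "a \<noteq> b \<Longrightarrow> card {u \<in> {a,b}. P u} = (if P a then 1 else 0) + (if P b then 1 else 0)"
proof -
  assume ab: "a \<noteq> b"
  have "{u \<in> {a,b}. P u} = (if P a then {a} else {}) \<union> (if P b then {b} else {})" by auto
  then show ?thesis using ab by (cases "P a"; cases "P b") (simp_all add: card_insert_if)
qed

lemma numB: assumes "n \<ge> 3" shows
  "(num_col (cycle_nbrs n) c Blue v > num_col (cycle_nbrs n) c White v) \<longleftrightarrow> (c (nx n v) = Blue \<and> c (pv n v) = Blue)"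
  using card2[OF nx_pv_neq[OF assms, of v]]
  by (cases "c (nx n v)"; cases "c (pv n v)") (simp_all add: num_col_def nbrs_eq)

lemma numW: assumes "n \<ge> 3" shows
  "(num_col (cycle_nbrs n) c White v > num_col (cycle_nbrs n) c Blue v) \<longleftrightarrow> (c (nx n v) = White \<and> c (pv n v) = White)"
  using card2[OF nx_pv_neq[OF assms, of v]]
  by (cases "c (nx n v)"; cases "c (pv n v)") (simp_all add: num_col_def nbrs_eq)

lemma mm_cyc: assumes "n \<ge> 3" shows
  "mm_step (cycle_nbrs n) c v = (if c (nx n v) = c (pv n v) then c (nx n v) else c v)"
  unfolding mm_step_def using numB[OF assms, of c v] numW[OF assms, of c v]
  by (cases "c (nx n v)"; cases "c (pv n v)") auto


abbreviation mm where "mm n \<equiv> mm_step (cycle_nbrs n)"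

lemma col2: "(a::color) \<noteq> x \<Longrightarrow> b \<noteq> x \<Longrightarrow> a = b"
  by (cases a; cases b; cases x) auto

lemma pair_keep: assumes "n \<ge> 3" "v < n" "c v = x" "c (nx n v) = x"
  shows "mm n c v = x \<and> mm n c (nx n v) = x"
  using assms mm_cyc[OF assms(1), of c v] mm_cyc[OF assms(1), of c "nx n v"] pv_nx[OF assms(1,2)]
  by auto

lemma pair_iter: assumes "n \<ge> 3" "v < n" "c v = x" "c (nx n v) = x"
  shows "(mm n ^^ t) c v = x \<and> (mm n ^^ t) c (nx n v) = x"
proof (induction t)
  case 0 then show ?case using assms by simp
next
  case (Suc t) then show ?case using pair_keep[OF assms(1,2)] by simp
qed

definition alt :: "nat \<Rightarrow> (nat \<Rightarrow> color) \<Rightarrow> bool" where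
  "alt n c \<longleftrightarrow> (\<forall>v<n. c (nx n v) \<noteq> c v)"

lemma alt_flip: assumes "n \<ge> 3" "alt n c" "v < n" shows "mm n c v \<noteq> c v"
proof -
  have n0: "n > 0" using assms by simp
  have p: "pv n v < n" using pv_lt[OF n0] .
  have "c (nx n (pv n v)) \<noteq> c (pv n v)" using assms(2) p unfolding alt_def by blast
  then have "c (pv n v) \<noteq> c v" using nx_pv[OF assms(1,3)] by simp
  moreover have "c (nx n v) \<noteq> c v" using assms(2,3) unfolding alt_def by blast
  ultimately have "c (nx n v) = c (pv n v)" using col2 by blast
  then show ?thesis using mm_cyc[OF assms(1), of c v] \<open>c (nx n v) \<noteq> c v\<close> by simp
qed

lemma alt_step: assumes "n \<ge> 3" "alt n c" shows "alt n (mm n c)"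
  unfolding alt_def
proof (intro allI impI)
  fix v assume v: "v < n"
  have n0: "n > 0" using assms by simp
  have a: "mm n c v \<noteq> c v" using alt_flip[OF assms v] .
  have b: "mm n c (nx n v) \<noteq> c (nx n v)" using alt_flip[OF assms nx_lt[OF n0]] .
  have d: "c (nx n v) \<noteq> c v" using assms(2) v unfolding alt_def by blast
  show "mm n c (nx n v) \<noteq> mm n c v" using a b d
    by (cases "c v"; cases "c (nx n v)"; cases "mm n c v"; cases "mm n c (nx n v)") auto
qed

lemma alt_iter: assumes "n \<ge> 3" "alt n c" shows "alt n ((mm n ^^ t) c)"
  by (induction t) (use assms alt_step in auto)

lemma alt_notmono: assumes "n \<ge> 3" "alt n c" shows "\<not> monochrome (cycle_nodes n) c x"
proof
  assume m: "monochrome (cycle_nodes n) c x"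
  have "c (nx n 0) \<noteq> c 0" using assms unfolding alt_def by auto
  moreover have "nx n 0 < n" using assms nx_lt by simp
  ultimately show False using m assms unfolding monochrome_def cycle_nodes_def by auto
qed

lemma conn: assumes "n \<ge> 3" "\<forall>v<n. v \<in> A \<longrightarrow> nx n v \<in> A" "a \<in> A" "a < n"
  shows "\<forall>w<n. w \<in> A"
proof -
  have k: "(a + k) mod n \<in> A" for k
  proof (induction k)
    case 0 then show ?case using assms by simp
  next
    case (Suc k)
    have "nx n ((a+k) mod n) \<in> A" using Suc assms(1,2) by simp
    then show ?case by (simp add: nx_def mod_Suc_eq)
  qed
  show ?thesis
  proof (intro allI impI)
    fix w assume w: "w < n"
    have "(a + (n - a + w)) mod n = w" using w assms(4) by simp
    then show "w \<in> A" using k[of "n - a + w"] by simp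
  qed
qed


definition stb :: "nat \<Rightarrow> color \<Rightarrow> (nat \<Rightarrow> color) \<Rightarrow> nat \<Rightarrow> bool" where
  "stb n x c v \<longleftrightarrow> c v = x \<and> (c (nx n v) = x \<or> c (pv n v) = x)"

definition cov :: "nat \<Rightarrow> color \<Rightarrow> (nat \<Rightarrow> color) \<Rightarrow> bool" where
  "cov n x c \<longleftrightarrow> (\<forall>v<n. c v = x \<or> c (nx n v) = x)"

lemma cov_step: assumes n: "n \<ge> 3" and cv: "cov n x c" shows "cov n x (mm n c)"
  unfolding cov_def
proof (intro allI impI)
  fix v assume v: "v < n"
  have n0: "n > 0" using n by simp
  define w where "w = nx n v"
  have w: "w < n" using nx_lt[OF n0] w_def by simp
  have pw: "pv n w = v" using pv_nx[OF n v] w_def by simp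
  have p: "pv n v < n" using pv_lt[OF n0] .
  have npv: "nx n (pv n v) = v" using nx_pv[OF n v] .
  have c1: "c v = x \<or> c w = x" using cv v w_def unfolding cov_def by blast
  have c2: "c (pv n v) = x \<or> c v = x" using cv p npv unfolding cov_def by metis
  have c3: "c w = x \<or> c (nx n w) = x" using cv w unfolding cov_def by blast
  have m1: "mm n c v = (if c w = c (pv n v) then c w else c v)" using mm_cyc[OF n, of c v] w_def by simp
  have m2: "mm n c w = (if c (nx n w) = c v then c (nx n w) else c w)" using mm_cyc[OF n, of c w] pw by simp
  show "mm n c v = x \<or> mm n c (nx n v) = x" unfolding w_def[symmetric] m1 m2 using c1 c2 c3
    by (cases x; cases "c v"; cases "c w"; cases "c (pv n v)"; cases "c (nx n w)") auto
qed

lemma stb_step: assumes n: "n \<ge> 3" and v: "v < n" and s: "stb n x c v" shows "stb n x (mm n c) v"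
proof -
  have n0: "n > 0" using n by simp
  have cv: "c v = x" using s stb_def by blast
  show ?thesis
  proof (cases "c (nx n v) = x")
    case True
    then show ?thesis using pair_keep[OF n v cv True] unfolding stb_def by blast
  next
    case False
    then have "c (pv n v) = x" using s stb_def by blast
    moreover have pl: "pv n v < n" using pv_lt[OF n0] .
    ultimately have "mm n c (pv n v) = x \<and> mm n c (nx n (pv n v)) = x"
      using pair_keep[OF n pl, of c x] nx_pv[OF n v] cv by simp
    then show ?thesis using nx_pv[OF n v] unfolding stb_def by simp
  qed
qed

lemma grow: assumes n: "n \<ge> 3" and cv: "cov n x c" and a: "a < n" "stb n x c a"
  and u: "u < n" "\<not> stb n x c u"
  shows "\<exists>w<n. \<not> stb n x c w \<and> stb n x (mm n c) w"
proof -
  have n0: "n > 0" using n by simp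
  have "\<not> (\<forall>v<n. v \<in> {v. stb n x c v} \<longrightarrow> nx n v \<in> {v. stb n x c v})"
  proof
    assume h: "\<forall>v<n. v \<in> {v. stb n x c v} \<longrightarrow> nx n v \<in> {v. stb n x c v}"
    have "\<forall>w<n. w \<in> {v. stb n x c v}" using conn[OF n h] a by blast
    then show False using u by blast
  qed
  then obtain v where v: "v < n" "stb n x c v" "\<not> stb n x c (nx n v)" by blast
  define w where "w = nx n v"
  have w: "w < n" using nx_lt[OF n0] w_def by simp
  have pw: "pv n w = v" using pv_nx[OF n v(1)] w_def by simp
  have cvx: "c v = x" using v stb_def by blast
  have cw: "c w \<noteq> x" using v(3) cvx pw unfolding w_def[symmetric] stb_def by auto
  have cnw: "c (nx n w) = x" using cv w cw unfolding cov_def by blast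
  have "mm n c w = x" using mm_cyc[OF n, of c w] pw cnw cvx by simp
  moreover have "mm n c v = x" using stb_step[OF n v(1,2)] stb_def by blast
  ultimately have "stb n x (mm n c) w" unfolding stb_def using pw by simp
  then show ?thesis using v(3) w w_def by blast
qed

lemma conv: assumes n: "n \<ge> 3" shows "cov n x c \<Longrightarrow> a < n \<Longrightarrow> stb n x c a \<Longrightarrow> \<exists>t. \<forall>v<n. (mm n ^^ t) c v = x"
proof (induction "card {v. v < n \<and> \<not> stb n x c v}" arbitrary: c rule: less_induct)
  case less
  show ?case
  proof (cases "\<exists>u<n. \<not> stb n x c u")
    case False
    then have "\<forall>v<n. c v = x" unfolding stb_def by blast
    then show ?thesis by (metis funpow_0)
  next
    case True
    then obtain u where u: "u < n" "\<not> stb n x c u" by blast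
    obtain w where w: "w < n" "\<not> stb n x c w" "stb n x (mm n c) w"
      using grow[OF n less.prems(1,2,3) u] by blast
    have sub: "{v. v < n \<and> \<not> stb n x (mm n c) v} \<subset> {v. v < n \<and> \<not> stb n x c v}"
      using stb_step[OF n] w by blast
    have fin: "finite {v. v < n \<and> \<not> stb n x c v}" by simp
    have lt: "card {v. v < n \<and> \<not> stb n x (mm n c) v} < card {v. v < n \<and> \<not> stb n x c v}"
      using psubset_card_mono[OF fin sub] .
    obtain t where t: "\<forall>v<n. (mm n ^^ t) (mm n c) v = x"
      using less.hyps[OF lt cov_step[OF n less.prems(1)] less.prems(2) stb_step[OF n less.prems(2,3)]] by blast
    have "\<forall>v<n. (mm n ^^ Suc t) c v = x" using t by (simp add: funpow_Suc_right del: funpow.simps)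
    then show ?thesis by blast
  qed
qed

lemma count: assumes n: "n \<ge> 3" and S: "S \<subseteq> {..<n}" and cover: "\<forall>v<n. v \<in> S \<or> nx n v \<in> S"
  and a: "a < n" "a \<in> S" "nx n a \<in> S"
  shows "n div 2 + 1 \<le> card S"
proof -
  have n0: "n > 0" using n by simp
  define C where "C = {..<n} - S"
  have inj: "inj_on (nx n) C"
    by (rule inj_onI) (metis C_def DiffD1 lessThan_iff pv_nx[OF n])
  have img: "nx n ` C \<subseteq> S - {nx n a}"
  proof
    fix y assume "y \<in> nx n ` C"
    then obtain v where v: "v \<in> C" "y = nx n v" by blast
    have "v < n" "v \<notin> S" using v C_def by auto
    then have "y \<in> S" using cover v by blast
    moreover have "y \<noteq> nx n a" using v \<open>v < n\<close> \<open>v \<notin> S\<close> a pv_nx[OF n] by metis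
    ultimately show "y \<in> S - {nx n a}" by blast
  qed
  have fS: "finite S" using S finite_subset by blast
  have "card C \<le> card (S - {nx n a})" using card_inj_on_le[OF inj img] fS by simp
  also have "\<dots> = card S - 1" using a(3) fS by simp
  finally have c1: "card C \<le> card S - 1" .
  have "card C = n - card S" unfolding C_def using card_Diff_subset[OF fS S] by simp
  moreover have "card S \<ge> 1" using a fS by (metis One_nat_def Suc_leI card_gt_0_iff empty_iff)
  ultimately show ?thesis using c1 by linarith
qed


lemma rmm_part: assumes n: "n \<ge> 3"
  shows "winning_RMM (cycle_nodes n) (cycle_nbrs n) S \<longleftrightarrow> S = cycle_nodes n"
proof
  assume S: "S = cycle_nodes n"
  show "winning_RMM (cycle_nodes n) (cycle_nbrs n) S"
    unfolding winning_RMM_def S by (metis order_refl)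
next
  assume W: "winning_RMM (cycle_nodes n) (cycle_nbrs n) S"
  have n0: "n > 0" using n by simp
  have sub: "S \<subseteq> {..<n}" using W unfolding winning_RMM_def cycle_nodes_def by blast
  show "S = cycle_nodes n"
  proof (rule ccontr)
    assume "S \<noteq> cycle_nodes n"
    then obtain u where u: "u < n" "u \<notin> S" using sub unfolding cycle_nodes_def by blast
    define run where "run = (\<lambda>t::nat. \<lambda>v. if v = (u + t) mod n then White else Blue)"
    have succ: "rmm_succ (cycle_nodes n) (cycle_nbrs n) (run t) (run (Suc t))" for t
      unfolding rmm_succ_def numB[OF n] numW[OF n]
    proof (intro ballI conjI impI)
      fix v assume v: "v \<in> cycle_nodes n"
      then have vl: "v < n" by (simp add: cycle_nodes_def)
      define p where "p = (u + t) mod n"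
      have pl: "p < n" using n0 p_def by simp
      have nxp: "nx n p = (u + Suc t) mod n" unfolding p_def nx_def by (simp add: mod_Suc_eq)
      {
        assume h: "run t (nx n v) = Blue \<and> run t (pv n v) = Blue"
        show "run (Suc t) v = Blue"
        proof (rule ccontr)
          assume "run (Suc t) v \<noteq> Blue"
          then have "v = nx n p" unfolding run_def nxp by (auto split: if_splits)
          then have "pv n v = p" using pv_nx[OF n pl] by simp
          then show False using h unfolding run_def p_def by simp
        qed
      }
      {
        assume h: "run t (nx n v) = White \<and> run t (pv n v) = White"
        then have "nx n v = pv n v" unfolding run_def by (auto split: if_splits)
        then show "run (Suc t) v = White" using nx_pv_neq[OF n] by blast
      }
    qed
    have m0: "monochrome S (run 0) Blue" unfolding monochrome_def run_def using u by auto
    obtain t where t: "monochrome (cycle_nodes n) (run t) Blue"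
      using W succ m0 unfolding winning_RMM_def by blast
    have "(u + t) mod n \<in> cycle_nodes n" using n0 by (simp add: cycle_nodes_def)
    then show False using t unfolding monochrome_def run_def by auto
  qed
qed

lemma mm_lower: assumes n: "n \<ge> 3" and W: "winning_MM (cycle_nodes n) (cycle_nbrs n) S"
  shows "n div 2 + 1 \<le> card S"
proof -
  have n0: "n > 0" using n by simp
  have sub: "S \<subseteq> {..<n}" using W unfolding winning_MM_def cycle_nodes_def by blast
  define c0 where "c0 = (\<lambda>u. if u \<in> S then Blue else White)"
  have m0: "monochrome S c0 Blue" unfolding monochrome_def c0_def by simp
  obtain t where t: "monochrome (cycle_nodes n) ((mm n ^^ t) c0) Blue"
    using W m0 unfolding winning_MM_def by blast
  show ?thesis
  proof (cases "\<exists>v<n. v \<notin> S \<and> nx n v \<notin> S")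
    case True
    then obtain v where v: "v < n" "v \<notin> S" "nx n v \<notin> S" by blast
    have "(mm n ^^ t) c0 v = White" using pair_iter[OF n v(1), of c0 White t] v c0_def by simp
    then show ?thesis using t v(1) unfolding monochrome_def cycle_nodes_def by auto
  next
    case False
    then have cover: "\<forall>v<n. v \<in> S \<or> nx n v \<in> S" by blast
    show ?thesis
    proof (cases "\<exists>a<n. a \<in> S \<and> nx n a \<in> S")
      case True
      then obtain a where "a < n" "a \<in> S" "nx n a \<in> S" by blast
      then show ?thesis using count[OF n sub cover] by blast
    next
      case False
      have "alt n c0" unfolding alt_def c0_def using False cover by auto
      then have "\<not> monochrome (cycle_nodes n) ((mm n ^^ t) c0) Blue"
        using alt_iter[OF n] alt_notmono[OF n] by blast
      then show ?thesis using t by blast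
    qed
  qed
qed

lemma mm_exists: assumes n: "n \<ge> 3"
  shows "\<exists>S. winning_MM (cycle_nodes n) (cycle_nbrs n) S \<and> card S = n div 2 + 1"
proof -
  have n0: "n > 0" using n by simp
  define E where "E = (\<lambda>k::nat. 2 * k) ` {..<(n+1) div 2}"
  define S where "S = E \<union> {n - 1}"
  have evenE: "e \<in> E" if "e < n" "even e" for e
  proof -
    have "e = 2 * (e div 2)" using that by simp
    moreover have "e div 2 < (n+1) div 2" using that by linarith
    ultimately show ?thesis unfolding E_def by blast
  qed
  have Esub: "E \<subseteq> {..<n}" unfolding E_def by auto
  have Ssub: "S \<subseteq> cycle_nodes n" unfolding S_def cycle_nodes_def using Esub n0 by auto
  have cover: "\<forall>v<n. v \<in> S \<or> nx n v \<in> S"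
  proof (intro allI impI)
    fix v assume v: "v < n"
    show "v \<in> S \<or> nx n v \<in> S"
    proof (cases "v + 1 = n")
      case True then show ?thesis unfolding S_def by auto
    next
      case False
      then have nv: "nx n v = v + 1" using nx_val[OF v] by simp
      show ?thesis
      proof (cases "even v")
        case True then show ?thesis using evenE v unfolding S_def by blast
      next
        case False then show ?thesis using evenE[of "v+1"] v \<open>v + 1 \<noteq> n\<close> nv unfolding S_def by auto
      qed
    qed
  qed
  have zE: "0 \<in> E" using evenE n0 by simp
  have nx_last: "nx n (n - 1) = 0" using nx_val[of "n-1" n] n0 by simp
  have win: "winning_MM (cycle_nodes n) (cycle_nbrs n) S"
    unfolding winning_MM_def
  proof (intro conjI allI impI)
    show "S \<subseteq> cycle_nodes n" by (rule Ssub)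
  next
    fix x c0 assume m: "monochrome S c0 x"
    have cv: "cov n x c0" unfolding cov_def using cover m unfolding monochrome_def by blast
    have "c0 (n - 1) = x" "c0 0 = x" using m zE unfolding monochrome_def S_def by auto
    then have st: "stb n x c0 (n - 1)" unfolding stb_def using nx_last by simp
    obtain t where "\<forall>v<n. (mm n ^^ t) c0 v = x" using conv[OF n cv _ st] n0 by auto
    then show "\<exists>t. monochrome (cycle_nodes n) ((mm n ^^ t) c0) x"
      unfolding monochrome_def cycle_nodes_def by auto
  qed
  have cE: "card E = (n+1) div 2" unfolding E_def by (simp add: card_image inj_on_def)
  have "card S = n div 2 + 1"
  proof (cases "even n")
    case True
    then have "n - 1 \<notin> E" unfolding E_def using n0 by auto
    then show ?thesis unfolding S_def using cE True Esub by (simp add: finite_subset)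
  next
    case False
    then have "n - 1 \<in> E" using evenE n0 by simp
    then show ?thesis unfolding S_def using cE False by (simp add: insert_absorb) 
  qed
  then show ?thesis using win by blast
qed

theorem theorem3p2:
  fixes n :: nat
  assumes "n \<ge> 3"
  shows "(\<forall>S. winning_RMM (cycle_nodes n) (cycle_nbrs n) S \<longleftrightarrow> S = cycle_nodes n)
    \<and> (\<exists>S. winning_MM (cycle_nodes n) (cycle_nbrs n) S \<and> card S = n div 2 + 1)
    \<and> (\<forall>S. winning_MM (cycle_nodes n) (cycle_nbrs n) S \<longrightarrow> n div 2 + 1 \<le> card S)"
  using rmm_part[OF assms] mm_exists[OF assms] mm_lower[OF assms] by blast

end
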